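(* Let $l_H(s)$, $s\in\mathcal S$, be the codeword lengths of a Huffman code for $p$, $L_H=\sum_s p(s)l_H(s)$, and $l^{\max}_H=\max_s l_H(s)$. Then there exists an sAEDS with $N=2^{l^{\max}_H}$ states (with $N_s=2^{l^{\max}_H-l_H(s)}$) in which $l(E_{\hat x}(s))=l_H(s)$ for every $\hat x\in\mathcal X$ and $s\in\mathcal S$; consequently its average code length equals $L_H$ for every stationary distribution $Q$. In particular the optimal sAEDS with $2^{l^{\max}_H}$ states has average code length at most $L_H$.
   Context: Let $\mathcal S$ be a finite alphabet with $|\mathcal S|\ge 2$ and $p=\{p(s)\}$ a probability distribution with $p(s)>0$ for all $s$ (i.i.d. source). $\mathcal B=\{0,1\}^*$ (including the empty word), $l(\beta)$ the word length, $\lg=\log_2$. An AEDS with finite state set $\mathcal X$, $|\mathcal X|=N$, consists of maps $E_{\hat x}:\mathcal S\to\mathcal B$ and $F^-_{\hat x}:\mathcal S\to\mathcal X$ ($\hat x\in\mathcal X$) such that for every $x\in\mathcal X$ the words $E_{\hat x}(s)$ over all pairs $(\hat x,s)$ with $F^-_{\hat x}(s)=x$ are pairwise distinct and form a prefix-free set. The state chain is the Markov chain on $\mathcal X$ moving from $\hat x$ to $F^-_{\hat x}(s)$ with probability $p(s)$; for a stationary distribution $Q$ the average code length is $L=\sum_{\hat x}\sum_s p(s)Q(\hat x)l(E_{\hat x}(s))$. A state-divided AEDS (sAEDS) is an AEDS for which the sets $\mathcal X_s=\{F^-_{\hat x}(s):\hat x\in\mathcal X\}$, $s\in\mathcal S$,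 are pairwise disjoint with union $\mathcal X$; $N_s=|\mathcal X_s|$. For $x\in\mathcal X_s$, $\mathcal F^+_x=\{\hat x: F^-_{\hat x}(s)=x\}$; for each $s$ these sets partition $\mathcal X$. The optimal sAEDS with $N$ states is one minimizing $L$ among sAEDSs with $N$ states. *)

theory Defs
  imports Complex_Main "HOL-Library.Sublist"
begin

definition prefix_free :: "bool list set \<Rightarrow> bool" where
  "prefix_free W \<longleftrightarrow> (\<forall>u\<in>W. \<forall>v\<in>W. u \<noteq> v \<longrightarrow> \<not> prefix u v)"

text \<open>Alphabet = UNIV of the symbol type; state set X (finite, nonempty);
  E xh s = encoding E_xh(s); F xh s = next state F^-_xh(s).\<close>

definition aeds :: "'x set \<Rightarrow> ('x \<Rightarrow> 's \<Rightarrow> bool list) \<Rightarrow> ('x \<Rightarrow> 's \<Rightarrow> 'x) \<Rightarrow> bool" where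
  "aeds X E F \<longleftrightarrow> finite X \<and> X \<noteq> {} \<and> (\<forall>xh\<in>X. \<forall>s. F xh s \<in> X) \<and>
     (\<forall>x\<in>X. inj_on (\<lambda>(xh, s). E xh s) {(xh, s). xh \<in> X \<and> F xh s = x} \<and>
             prefix_free ((\<lambda>(xh, s). E xh s) ` {(xh, s). xh \<in> X \<and> F xh s = x}))"

definition state_set :: "'x set \<Rightarrow> ('x \<Rightarrow> 's \<Rightarrow> 'x) \<Rightarrow> 's \<Rightarrow> 'x set" where
  "state_set X F s = (\<lambda>xh. F xh s) ` X"

definition saeds :: "'x set \<Rightarrow> ('x \<Rightarrow> 's \<Rightarrow> bool list) \<Rightarrow> ('x \<Rightarrow> 's \<Rightarrow> 'x) \<Rightarrow> bool" where
  "saeds X E F \<longleftrightarrow> aeds X E F \<and>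
     (\<forall>s t. s \<noteq> t \<longrightarrow> state_set X F s \<inter> state_set X F t = {}) \<and>
     (\<Union>s. state_set X F s) = X"

definition stationary :: "('s::finite \<Rightarrow> real) \<Rightarrow> 'x set \<Rightarrow> ('x \<Rightarrow> 's \<Rightarrow> 'x) \<Rightarrow> ('x \<Rightarrow> real) \<Rightarrow> bool" where
  "stationary p X F Q \<longleftrightarrow> (\<forall>x\<in>X. 0 \<le> Q x) \<and> (\<Sum>x\<in>X. Q x) = 1 \<and>
     (\<forall>x\<in>X. Q x = (\<Sum>xh\<in>X. \<Sum>s\<in>{s. F xh s = x}. p s * Q xh))"

definition avg_len :: "('s::finite \<Rightarrow> real) \<Rightarrow> 'x set \<Rightarrow> ('x \<Rightarrow> 's \<Rightarrow> bool list) \<Rightarrow> ('x \<Rightarrow> real) \<Rightarrow> real" where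
  "avg_len p X E Q = (\<Sum>xh\<in>X. \<Sum>s\<in>UNIV. p s * Q xh * real (length (E xh s)))"

definition weight :: "('s \<Rightarrow> real) \<Rightarrow> 's set \<Rightarrow> real" where
  "weight p A = (\<Sum>s\<in>A. p s)"

text \<open>Huffman procedure on a forest, each tree represented by its set of leaves.
  huffman_run p T d: starting from forest T, some run of Huffman's algorithm
  (arbitrary tie-breaking) yields leaf depths d.\<close>

inductive huffman_run :: "('s \<Rightarrow> real) \<Rightarrow> 's set set \<Rightarrow> ('s \<Rightarrow> nat) \<Rightarrow> bool" for p where
  single: "huffman_run p {A} (\<lambda>s. 0)"
| merge: "\<lbrakk> A \<in> T; B \<in> T; A \<noteq> B;
            \<forall>C\<in>T. weight p A \<le> weight p C;
            \<forall>C\<in>T - {A}. weight p B \<le> weight p C;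
            huffman_run p (insert (A \<union> B) (T - {A, B})) d \<rbrakk>
          \<Longrightarrow> huffman_run p T (\<lambda>s. if s \<in> A \<union> B then Suc (d s) else d s)"

definition huffman_lengths :: "('s \<Rightarrow> real) \<Rightarrow> ('s \<Rightarrow> nat) \<Rightarrow> bool" where
  "huffman_lengths p l \<longleftrightarrow> huffman_run p ((\<lambda>s. {s}) ` UNIV) l"

end

theory Submission
  imports Defs "HOL-Analysis.Analysis"
begin


lemma huff_kraft_gen:
  assumes "huffman_run p T d"
  shows "finite T \<Longrightarrow> (\<forall>A\<in>T. A \<noteq> {}) \<Longrightarrow> (\<forall>A\<in>T. \<forall>B\<in>T. A \<noteq> B \<longrightarrow> A \<inter> B = {}) \<Longrightarrow>
    \<exists>f. (\<forall>A\<in>T. \<forall>s\<in>A. d s = f A) \<and> (\<Sum>A\<in>T. (1/2::real)^(f A)) = 1"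
  using assms
proof (induction rule: huffman_run.induct)
  case (single A)
  then show ?case by (intro exI[of _ "\<lambda>_. 0"]) auto
next
  case (merge A T B d)
  let ?T' = "insert (A \<union> B) (T - {A, B})"
  have ne: "A \<noteq> {}" "B \<noteq> {}" using merge by auto
  have dj: "A \<inter> B = {}" using merge by auto
  have notin: "A \<union> B \<notin> T - {A, B}"
  proof
    assume "A \<union> B \<in> T - {A, B}"
    then have "A \<union> B \<in> T" "A \<union> B \<noteq> A" by auto
    moreover have "\<And>C D. C \<in> T \<Longrightarrow> D \<in> T \<Longrightarrow> C \<noteq> D \<Longrightarrow> C \<inter> D = {}" using merge.prems(3) by blast
    ultimately have "(A \<union> B) \<inter> A = {}" using merge.hyps(1) by blast
    with ne show False by auto
  qed
  have "finite ?T'" using merge.prems by auto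
  moreover have "\<forall>C\<in>?T'. C \<noteq> {}" using merge.prems ne by auto
  moreover have "\<forall>C\<in>?T'. \<forall>D\<in>?T'. C \<noteq> D \<longrightarrow> C \<inter> D = {}"
  proof (intro ballI impI)
    fix C D assume C: "C \<in> ?T'" and D: "D \<in> ?T'" and CD: "C \<noteq> D"
    have dj0: "\<And>C D. C \<in> T \<Longrightarrow> D \<in> T \<Longrightarrow> C \<noteq> D \<Longrightarrow> C \<inter> D = {}" using merge.prems(3) by blast
    show "C \<inter> D = {}"
    proof (cases "C = A \<union> B")
      case True
      then have "D \<in> T" "D \<noteq> A" "D \<noteq> B" using D CD by auto
      then show ?thesis using True dj0[of D A] dj0[of D B] merge.hyps(1,2) by auto
    next
      case F: False
      show ?thesis
      proof (cases "D = A \<union> B")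
        case True
        then have "C \<in> T" "C \<noteq> A" "C \<noteq> B" using C F by auto
        then show ?thesis using True dj0[of C A] dj0[of C B] merge.hyps(1,2) by auto
      next
        case False
        then show ?thesis using F C D CD dj0 by auto
      qed
    qed
  qed
  ultimately obtain f where f: "\<forall>C\<in>?T'. \<forall>s\<in>C. d s = f C" "(\<Sum>C\<in>?T'. (1/2::real)^(f C)) = 1"
    using merge.IH by blast
  define g where "g C = (if C = A \<or> C = B then Suc (f (A \<union> B)) else f C)" for C
  show ?case
  proof (intro exI[of _ g] conjI ballI)
    fix C s assume C: "C \<in> T" and s: "s \<in> C"
    show "(if s \<in> A \<union> B then Suc (d s) else d s) = g C"
    proof (cases "C = A \<or> C = B")
      case True
      then show ?thesis using f(1) s by (auto simp: g_def)
    next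
      case False
      then have "C \<inter> A = {}" "C \<inter> B = {}" using merge.prems(3) merge.hyps(1,2) C by auto
      then have "s \<notin> A \<union> B" using s by auto
      moreover have "C \<in> ?T'" using C False by auto
      ultimately show ?thesis using f(1) s False by (auto simp: g_def)
    qed
  next
    have fin: "finite T" using merge.prems by auto
    have "(\<Sum>C\<in>T. (1/2::real)^(g C)) = (\<Sum>C\<in>{A,B}. (1/2::real)^(g C)) + (\<Sum>C\<in>T - {A,B}. (1/2::real)^(g C))"
      using fin merge.hyps(1,2) by (subst sum.subset_diff[of "{A,B}"]) auto
    also have "(\<Sum>C\<in>{A,B}. (1/2::real)^(g C)) = (1/2)^(f (A \<union> B))"
      using merge.hyps(3) by (simp add: g_def)
    also have "(\<Sum>C\<in>T - {A,B}. (1/2::real)^(g C)) = (\<Sum>C\<in>T - {A,B}. (1/2::real)^(f C))"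
      by (rule sum.cong) (auto simp: g_def)
    also have "(1/2::real)^(f (A \<union> B)) + (\<Sum>C\<in>T - {A,B}. (1/2::real)^(f C)) = (\<Sum>C\<in>?T'. (1/2::real)^(f C))"
      using fin notin by simp
    finally show "(\<Sum>C\<in>T. (1/2::real)^(g C)) = 1" using f(2) by simp
  qed
qed


lemma huff_depth:
  assumes "huffman_run p T d"
  shows "finite T \<Longrightarrow> d s \<le> card T"
  using assms
proof (induction arbitrary: s rule: huffman_run.induct)
  case (single A)
  then show ?case by simp
next
  case (merge A T B d)
  let ?T' = "insert (A \<union> B) (T - {A, B})"
  have "card ?T' \<le> Suc (card (T - {A,B}))" by (simp add: card_insert_le_m1 card_insert_if)
  also have "card (T - {A,B}) = card T - 2" using merge by (simp add: card_Diff_subset)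
  finally have c: "card ?T' \<le> Suc (card T - 2)" .
  have "card {A,B} \<le> card T" using merge.hyps(1,2) merge.prems by (intro card_mono) auto
  then have "card T \<ge> 2" using merge.hyps(3) by simp
  with c have "card ?T' < card T" by linarith
  moreover have "d s \<le> card ?T'" using merge by auto
  ultimately show ?case by auto
qed



lemma stat_vec:
  fixes G :: "'k::finite \<Rightarrow> 's::finite \<Rightarrow> 'k" and p :: "'s \<Rightarrow> real"
  assumes p0: "\<forall>s. p s \<ge> 0" and p1: "sum p UNIV = 1"
  shows "\<exists>Q. (\<forall>i. Q i \<ge> 0) \<and> sum Q UNIV = 1 \<and>
     (\<forall>i. Q i = (\<Sum>j\<in>UNIV. \<Sum>s\<in>{s. G j s = i}. p s * Q j))"
proof -
  define S where "S = {v::real^'k. (\<forall>i. 0 \<le> v$i) \<and> sum (\<lambda>i. v$i) UNIV = 1}"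
  define f where "f v = (\<chi> i. \<Sum>j\<in>UNIV. \<Sum>s\<in>{s. G j s = i}. p s * v$j)" for v :: "real^'k"
  have key: "(\<Sum>i\<in>UNIV. \<Sum>s\<in>{s. G j s = i}. p s) = 1" for j
    using sum.group[of UNIV UNIV "G j" p] p1 by simp
  have "closed S"
  proof -
    have "S = {v::real^'k. \<forall>i. 0 \<le> v$i} \<inter> {v. sum (\<lambda>i. v$i) UNIV = 1}"
      unfolding S_def by auto
    moreover have "closed {v::real^'k. sum (\<lambda>i. v$i) UNIV = 1}"
      by (intro closed_Collect_eq continuous_intros)
    ultimately show ?thesis using closed_positive_orthant by auto
  qed
  moreover have "bounded S"
    unfolding bounded_iff
  proof (intro exI[of _ 1] ballI)
    fix v assume "v \<in> S"
    then have "sum (\<lambda>i. \<bar>v$i\<bar>) UNIV = 1" unfolding S_def by simp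
    then show "norm v \<le> 1" using norm_le_l1_cart[of v] by simp
  qed
  ultimately have "compact S" by (simp add: compact_eq_bounded_closed)
  moreover have "convex S"
    unfolding convex_def
  proof (intro ballI allI impI)
    fix x y :: "real^'k" and u v :: real
    assume x: "x \<in> S" and y: "y \<in> S" and uv: "0 \<le> u" "0 \<le> v" "u + v = 1"
    have "(\<Sum>i\<in>UNIV. (u *\<^sub>R x + v *\<^sub>R y) $ i) = u * (\<Sum>i\<in>UNIV. x$i) + v * (\<Sum>i\<in>UNIV. y$i)"
      by (simp add: sum.distrib sum_distrib_left)
    also have "\<dots> = 1" using x y uv unfolding S_def by simp
    finally show "u *\<^sub>R x + v *\<^sub>R y \<in> S"
      using x y uv unfolding S_def by simp
  qed
  moreover obtain i0 :: 'k where True by simp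
  have "(\<chi> i. if i = i0 then 1 else 0) \<in> S" unfolding S_def by simp
  then have "S \<noteq> {}" by blast
  moreover have "continuous_on S f"
    unfolding f_def by (intro continuous_intros)
  moreover have "f \<in> S \<rightarrow> S"
  proof
    fix v assume v: "v \<in> S"
    have "(\<Sum>i\<in>UNIV. f v $ i) = (\<Sum>i\<in>UNIV. \<Sum>j\<in>UNIV. \<Sum>s\<in>{s. G j s = i}. p s * v$j)"
      unfolding f_def by simp
    also have "\<dots> = (\<Sum>j\<in>UNIV. \<Sum>i\<in>UNIV. \<Sum>s\<in>{s. G j s = i}. p s * v$j)"
      by (rule sum.swap)
    also have "\<dots> = (\<Sum>j\<in>UNIV. v$j * (\<Sum>i\<in>UNIV. \<Sum>s\<in>{s. G j s = i}. p s))"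
      by (simp add: sum_distrib_left mult.commute)
    also have "\<dots> = 1" using key v unfolding S_def by simp
    finally have "(\<Sum>i\<in>UNIV. f v $ i) = 1" .
    moreover have "0 \<le> f v $ i" for i
      using v p0 unfolding S_def f_def by (simp add: sum_nonneg)
    ultimately show "f v \<in> S" unfolding S_def by simp
  qed
  ultimately obtain v where "v \<in> S" "f v = v" using brouwer by metis
  then show ?thesis unfolding S_def f_def
    by (intro exI[of _ "\<lambda>i. v$i"]) (auto simp: vec_eq_iff)
qed



lemma stat_exists:
  fixes X :: "nat set" and F :: "nat \<Rightarrow> 's::finite \<Rightarrow> nat" and g :: "nat \<Rightarrow> 'k::finite"
    and p :: "'s \<Rightarrow> real"
  assumes X: "x0 \<in> X" "finite X" and FX: "\<forall>xh\<in>X. \<forall>s. F xh s \<in> X" and g: "inj_on g X"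
    and p0: "\<forall>s. p s \<ge> 0" and p1: "sum p UNIV = 1"
  shows "\<exists>Q. stationary p X F Q"
proof -
  define G where "G i s = g (F (if i \<in> g ` X then inv_into X g i else x0) s)" for i s
  obtain Qk where Q0: "\<forall>i. Qk i \<ge> 0" and Q1: "sum Qk UNIV = 1" and
    Qs: "\<forall>i. Qk i = (\<Sum>j\<in>UNIV. \<Sum>s\<in>{s. G j s = i}. p s * Qk j)"
    using stat_vec[OF p0 p1, of G] by blast
  have Gin: "G j s \<in> g ` X" for j s
  proof -
    have "(if j \<in> g ` X then inv_into X g j else x0) \<in> X"
      using X(1) inv_into_into[of j g X] by simp
    then have "F (if j \<in> g ` X then inv_into X g j else x0) s \<in> X" using FX by blast
    then show ?thesis unfolding G_def by (rule imageI)
  qed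
  have out: "Qk i = 0" if "i \<notin> g ` X" for i
  proof -
    have "{s. G j s = i} = {}" for j using Gin that by auto
    then have "(\<Sum>j\<in>UNIV. \<Sum>s\<in>{s. G j s = i}. p s * Qk j) = 0" by simp
    then show ?thesis using spec[OF Qs, of i] by linarith
  qed
  have Gg: "G (g xh) s = g (F xh s)" if "xh \<in> X" for xh s
    unfolding G_def using that g by simp
  define Q where "Q x = Qk (g x)" for x
  have "sum Q X = sum Qk (g ` X)"
    unfolding Q_def using sum.reindex[OF g, of Qk] by simp
  also have "\<dots> = sum Qk UNIV"
    by (rule sum.mono_neutral_left) (auto simp: out)
  finally have sQ: "sum Q X = 1" using Q1 by simp
  have st: "Q x = (\<Sum>xh\<in>X. \<Sum>s\<in>{s. F xh s = x}. p s * Q xh)" if x: "x \<in> X" for x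
  proof -
    have "Q x = (\<Sum>j\<in>UNIV. \<Sum>s\<in>{s. G j s = g x}. p s * Qk j)"
      unfolding Q_def by (rule spec[OF Qs])
    also have "\<dots> = (\<Sum>j\<in>g ` X. \<Sum>s\<in>{s. G j s = g x}. p s * Qk j)"
      by (rule sum.mono_neutral_right) (auto simp: out)
    also have "\<dots> = (\<Sum>xh\<in>X. \<Sum>s\<in>{s. G (g xh) s = g x}. p s * Qk (g xh))"
      using sum.reindex[OF g] by simp
    also have "\<dots> = (\<Sum>xh\<in>X. \<Sum>s\<in>{s. F xh s = x}. p s * Q xh)"
    proof (rule sum.cong[OF refl])
      fix xh assume xh: "xh \<in> X"
      have "G (g xh) s = g x \<longleftrightarrow> F xh s = x" for s
        unfolding Gg[OF xh] using inj_on_eq_iff[OF g] x xh FX by blast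
      then have "{s. G (g xh) s = g x} = {s. F xh s = x}" by blast
      then show "(\<Sum>s\<in>{s. G (g xh) s = g x}. p s * Qk (g xh)) = (\<Sum>s\<in>{s. F xh s = x}. p s * Q xh)"
        by (simp add: Q_def)
    qed
    finally show ?thesis .
  qed
  show ?thesis unfolding stationary_def
    by (intro exI[of _ Q] conjI ballI sQ st) (simp add: Q_def Q0)
qed



definition bits :: "nat \<Rightarrow> nat \<Rightarrow> bool list" where
  "bits n a = map (bit a) [0..<n]"

lemma bits_length[simp]: "length (bits n a) = n"
  by (simp add: bits_def)

lemma bits_eq: "bits n a = bits n b \<Longrightarrow> a mod 2^n = b mod 2^n"
proof -
  assume "bits n a = bits n b"
  then have h: "\<forall>i<n. bit a i = bit b i" by (simp add: bits_def)
  have "take_bit n a = take_bit n b"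
    by (rule bit_eqI) (use h in \<open>auto simp: bit_take_bit_iff\<close>)
  then show ?thesis by (simp add: take_bit_eq_mod)
qed

lemma construction:
  fixes l :: "'s::finite \<Rightarrow> nat" and lmax :: nat
  assumes le: "\<forall>s. l s \<le> lmax" and kraft: "(\<Sum>s\<in>UNIV. 2^(lmax - l s)) = (2::nat)^lmax"
  shows "\<exists>(X::nat set) E F. saeds X E F \<and> card X = 2 ^ lmax
            \<and> (\<forall>s. card (state_set X F s) = 2 ^ (lmax - l s))
            \<and> (\<forall>xh\<in>X. \<forall>s. length (E xh s) = l s)"
proof -
  define N where "N = (2::nat)^lmax"
  define Sig where "Sig = (SIGMA s:(UNIV::'s set). {..<(2::nat)^(lmax - l s)})"
  have finSig: "finite Sig" unfolding Sig_def by auto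
  have cSig: "card Sig = N" unfolding Sig_def N_def using kraft by simp
  obtain enc n where enc: "enc ` Sig = {i::nat. i < n}" "inj_on enc Sig"
    using finite_imp_inj_to_nat_seg[OF finSig] by blast
  have "n = N" using card_image[OF enc(2)] enc(1) cSig by simp
  with enc have encS: "enc ` Sig = {..<N}" by auto
  define X where "X = {..<N}"
  define E where "E xh s = bits (l s) xh" for xh s
  define F where "F xh s = enc (s, xh div 2^(l s))" for xh s
  have Nsplit: "N = 2^(lmax - l s) * 2^(l s)" for s
    unfolding N_def using le by (simp add: power_add[symmetric])
  have inSig: "(s, xh div 2^(l s)) \<in> Sig" if "xh \<in> X" for xh s
  proof -
    have "xh < 2^(lmax - l s) * 2^(l s)" using that Nsplit[of s] unfolding X_def by simp
    then have "xh div 2^(l s) < 2^(lmax - l s)" by (rule less_mult_imp_div_less)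
    then show ?thesis unfolding Sig_def by simp
  qed
  have FX: "F xh s \<in> X" if "xh \<in> X" for xh s
    using inSig[OF that, of s] encS unfolding F_def X_def by blast
  have Feq: "s = s' \<and> xh div 2^(l s) = xh' div 2^(l s')"
    if "xh \<in> X" "xh' \<in> X" "F xh s = F xh' s'" for xh xh' s s'
    using inj_onD[OF enc(2) _ inSig[OF that(1)] inSig[OF that(2)]] that(3) unfolding F_def by simp
  have SS: "state_set X F s = enc ` ({s} \<times> {..<2^(lmax - l s)})" for s
  proof
    show "state_set X F s \<subseteq> enc ` ({s} \<times> {..<2^(lmax - l s)})"
    proof
      fix y assume "y \<in> state_set X F s"
      then obtain xh where xh: "xh \<in> X" "y = F xh s" unfolding state_set_def by auto
      then show "y \<in> enc ` ({s} \<times> {..<2^(lmax - l s)})"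
        using inSig[OF xh(1), of s] unfolding F_def Sig_def by auto
    qed
  next
    show "enc ` ({s} \<times> {..<2^(lmax - l s)}) \<subseteq> state_set X F s"
    proof
      fix y assume "y \<in> enc ` ({s} \<times> {..<2^(lmax - l s)})"
      then obtain k where k: "k < 2^(lmax - l s)" "y = enc (s, k)" by auto
      have "k * 2^(l s) < 2^(lmax - l s) * 2^(l s)" using k(1) by simp
      then have "k * 2^(l s) \<in> X" unfolding X_def using Nsplit[of s] by simp
      moreover have "F (k * 2^(l s)) s = y" unfolding F_def using k(2) by simp
      ultimately show "y \<in> state_set X F s" unfolding state_set_def by blast
    qed
  qed
  have sub: "{s} \<times> {..<2^(lmax - l s)} \<subseteq> Sig" for s unfolding Sig_def by auto
  have card_ss: "card (state_set X F s) = 2^(lmax - l s)" for s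
    unfolding SS using card_image[OF inj_on_subset[OF enc(2) sub[of s]]] by simp
  have disj: "state_set X F s \<inter> state_set X F t = {}" if "s \<noteq> t" for s t
    unfolding SS using inj_onD[OF enc(2)] sub[of s] sub[of t] that by blast
  have cover: "(\<Union>s. state_set X F s) = X"
  proof
    show "(\<Union>s. state_set X F s) \<subseteq> X" using FX unfolding state_set_def by auto
  next
    show "X \<subseteq> (\<Union>s. state_set X F s)"
    proof
      fix y assume "y \<in> X"
      then have "y \<in> enc ` Sig" using encS unfolding X_def by simp
      then obtain z where "z \<in> Sig" "y = enc z" by blast
      then obtain s k where "(s, k) \<in> Sig" "y = enc (s, k)" by (cases z) auto
      then show "y \<in> (\<Union>s. state_set X F s)" unfolding SS Sig_def by blast
    qed
  qed
  have aeds: "aeds X E F"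
    unfolding aeds_def
  proof (intro conjI ballI allI)
    show "finite X" unfolding X_def by auto
    have "0 \<in> X" unfolding X_def N_def by simp
    then show "X \<noteq> {}" by blast
  next
    fix xh s assume "xh \<in> X" then show "F xh s \<in> X" by (rule FX)
  next
    fix x assume x: "x \<in> X"
    have key: "xh = xh' \<and> s = s'" if
      a: "xh \<in> X" "F xh s = x" "xh' \<in> X" "F xh' s' = x" "E xh s = E xh' s'" for xh s xh' s'
    proof -
      have "F xh s = F xh' s'" using a(2,4) by simp
      from Feq[OF a(1,3) this] have ss: "s' = s" "xh div 2^(l s) = xh' div 2^(l s)" by auto
      have "bits (l s) xh = bits (l s) xh'" using a(5) ss(1) unfolding E_def by simp
      then have md: "xh mod 2^(l s) = xh' mod 2^(l s)" by (rule bits_eq)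
      have "xh = xh div 2^(l s) * 2^(l s) + xh mod 2^(l s)" by (rule div_mult_mod_eq[symmetric])
      also have "\<dots> = xh' div 2^(l s) * 2^(l s) + xh' mod 2^(l s)" using ss(2) md by simp
      also have "\<dots> = xh'" by (rule div_mult_mod_eq)
      finally have "xh = xh'" .
      then show "xh = xh' \<and> s = s'" using ss by simp
    qed
    show "inj_on (\<lambda>(xh, s). E xh s) {(xh, s). xh \<in> X \<and> F xh s = x}"
      unfolding inj_on_def using key by auto
    have key2: False if
      a: "xh \<in> X" "F xh s = x" "xh' \<in> X" "F xh' s' = x" "E xh s \<noteq> E xh' s'"
        and pf: "prefix (E xh s) (E xh' s')" for xh s xh' s'
    proof -
      have "F xh s = F xh' s'" using a(2,4) by simp
      from Feq[OF a(1,3) this] have "s' = s" by auto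
      then have "length (E xh s) = length (E xh' s')" unfolding E_def by simp
      with pf have "E xh s = E xh' s'" by (auto simp: prefix_def)
      with a(5) show False by simp
    qed
    show "prefix_free ((\<lambda>(xh, s). E xh s) ` {(xh, s). xh \<in> X \<and> F xh s = x})"
      unfolding prefix_free_def
    proof (intro ballI impI notI)
      fix u v assume u: "u \<in> (\<lambda>(x, y). E x y) ` {(xh, s). xh \<in> X \<and> F xh s = x}"
        and v: "v \<in> (\<lambda>(x, y). E x y) ` {(xh, s). xh \<in> X \<and> F xh s = x}"
        and uv: "u \<noteq> v" and pf: "prefix u v"
      from u obtain xh s where "u = E xh s" "xh \<in> X" "F xh s = x" by auto
      moreover from v obtain xh' s' where "v = E xh' s'" "xh' \<in> X" "F xh' s' = x" by auto
      ultimately show False using key2 uv pf by blast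
    qed
  qed
  have "saeds X E F" unfolding saeds_def using aeds disj cover by blast
  moreover have "card X = 2^lmax" unfolding X_def N_def by simp
  moreover have "\<forall>xh\<in>X. \<forall>s. length (E xh s) = l s" unfolding E_def by simp
  ultimately show ?thesis using card_ss by blast
qed



theorem theorem3:
  fixes p :: "'s::finite \<Rightarrow> real" and l :: "'s \<Rightarrow> nat"
  assumes "card (UNIV :: 's set) \<ge> 2"
    and "\<forall>s. p s > 0"
    and "(\<Sum>s\<in>UNIV. p s) = 1"
    and "huffman_lengths p l"
  defines "lmax \<equiv> Max (range l)"
    and "LH \<equiv> (\<Sum>s\<in>UNIV. p s * real (l s))"
  shows "(\<exists>(X::nat set) E F. saeds X E F \<and> card X = 2 ^ lmax
            \<and> (\<forall>s. card (state_set X F s) = 2 ^ (lmax - l s))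
            \<and> (\<forall>xh\<in>X. \<forall>s. length (E xh s) = l s)
            \<and> (\<forall>Q. stationary p X F Q \<longrightarrow> avg_len p X E Q = LH))
       \<and> Inf {avg_len p X E Q | (X::nat set) E F Q.
               saeds X E F \<and> card X = 2 ^ lmax \<and> stationary p X F Q} \<le> LH"
proof -
  define T0 where "T0 = (\<lambda>s. {s}) ` (UNIV :: 's set)"
  have hr: "huffman_run p T0 l" using assms(4) unfolding huffman_lengths_def T0_def .
  have injS: "inj (\<lambda>s::'s. {s})" by (auto intro: injI)
  have finT0: "finite T0" unfolding T0_def by simp
  have cT0: "card T0 = card (UNIV :: 's set)" unfolding T0_def using card_image[OF injS] by simp
  obtain f where f: "\<forall>A\<in>T0. \<forall>s\<in>A. l s = f A" "(\<Sum>A\<in>T0. (1/2::real)^(f A)) = 1"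
    using huff_kraft_gen[OF hr finT0] unfolding T0_def by auto
  have kr: "(\<Sum>s\<in>UNIV. (1/2::real)^(l s)) = 1"
  proof -
    have "(\<Sum>A\<in>T0. (1/2::real)^(f A)) = (\<Sum>s\<in>UNIV. (1/2::real)^(f {s}))"
      unfolding T0_def using sum.reindex[OF injS, of "\<lambda>A. (1/2::real)^(f A)"] by simp
    also have "\<dots> = (\<Sum>s\<in>UNIV. (1/2::real)^(l s))"
      using f(1) unfolding T0_def by (intro sum.cong) auto
    finally show ?thesis using f(2) by simp
  qed
  have le: "\<forall>s. l s \<le> lmax" unfolding lmax_def by simp
  have lmax_card: "lmax \<le> card (UNIV :: 's set)"
  proof -
    have "lmax \<in> range l" unfolding lmax_def by (intro Max_in) auto
    then obtain s where "lmax = l s" by auto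
    then show ?thesis using huff_depth[OF hr finT0, of s] cT0 by simp
  qed
  have kraft: "(\<Sum>s\<in>UNIV. 2^(lmax - l s)) = (2::nat)^lmax"
  proof -
    have "real (\<Sum>s\<in>UNIV. 2^(lmax - l s)) = (\<Sum>s\<in>UNIV. (2::real)^(lmax - l s))" by simp
    also have "\<dots> = (\<Sum>s\<in>UNIV. 2^lmax * (1/2::real)^(l s))"
      using le by (intro sum.cong) (auto simp: power_diff power_one_over)
    also have "\<dots> = 2^lmax" using kr by (simp add: sum_distrib_left[symmetric])
    finally show ?thesis by (metis of_nat_eq_iff of_nat_numeral of_nat_power)
  qed
  obtain X :: "nat set" and E F where c: "saeds X E F" "card X = 2 ^ lmax"
     "\<forall>s. card (state_set X F s) = 2 ^ (lmax - l s)" "\<forall>xh\<in>X. \<forall>s. length (E xh s) = l s"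
    using construction[OF le kraft] by blast
  have avg: "avg_len p X E Q = LH" if Q: "stationary p X F Q" for Q
  proof -
    have "avg_len p X E Q = (\<Sum>xh\<in>X. Q xh * LH)"
      unfolding avg_len_def LH_def using c(4)
      by (intro sum.cong) (auto simp: sum_distrib_left mult.commute mult.left_commute)
    also have "\<dots> = LH * sum Q X" by (simp add: sum_distrib_left mult.commute)
    also have "sum Q X = 1" using Q unfolding stationary_def by blast
    finally show ?thesis by simp
  qed
  have p0: "\<forall>s. p s \<ge> 0" using assms(2) by (simp add: less_imp_le)
  have finX: "finite X" and neX: "X \<noteq> {}" using c(2) by (auto intro: card_ge_0_finite)
  then obtain x0 where x0: "x0 \<in> X" by blast
  have FX: "\<forall>xh\<in>X. \<forall>s. F xh s \<in> X" using c(1) unfolding saeds_def aeds_def by (elim conjE)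
  have "card X \<le> card (UNIV :: 's set set)"
  proof -
    have "(2::nat)^lmax \<le> 2^card (UNIV :: 's set)" using lmax_card by (simp add: power_increasing)
    also have "\<dots> = card (Pow (UNIV :: 's set))" by (simp add: card_Pow)
    finally show ?thesis using c(2) by simp
  qed
  then obtain g :: "nat \<Rightarrow> 's set" where "inj_on g X"
    using card_le_inj[OF finX, of "UNIV :: 's set set"] by auto
  then obtain Q0 where Q0: "stationary p X F Q0"
    using stat_exists[OF x0 finX FX _ p0 assms(3)] by blast
  define AS where "AS = {avg_len p X E Q | (X::nat set) E F Q.
               saeds X E F \<and> card X = 2 ^ lmax \<and> stationary p X F Q}"
  have "avg_len p X E Q0 \<in> AS" unfolding AS_def using c(1,2) Q0 by blast
  then have "LH \<in> AS" using avg[OF Q0] by simp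
  moreover have "bdd_below AS"
  proof (rule bdd_belowI)
    fix y assume "y \<in> AS"
    then obtain X' :: "nat set" and E' Q' F' where y: "y = avg_len p X' E' Q'" "stationary p X' F' Q'"
      unfolding AS_def by blast
    have "\<forall>x\<in>X'. 0 \<le> Q' x" using y(2) unfolding stationary_def by blast
    then show "0 \<le> y" unfolding y(1) avg_len_def
      using p0 by (auto intro!: sum_nonneg)
  qed
  ultimately have inf: "Inf AS \<le> LH" by (rule cInf_lower)
  have cc: "saeds X E F \<and> card X = 2 ^ lmax
            \<and> (\<forall>s. card (state_set X F s) = 2 ^ (lmax - l s))
            \<and> (\<forall>xh\<in>X. \<forall>s. length (E xh s) = l s)
            \<and> (\<forall>Q. stationary p X F Q \<longrightarrow> avg_len p X E Q = LH)"
    using c avg by (intro conjI allI impI) auto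
  have ex: "\<exists>(X::nat set) E F. saeds X E F \<and> card X = 2 ^ lmax
            \<and> (\<forall>s. card (state_set X F s) = 2 ^ (lmax - l s))
            \<and> (\<forall>xh\<in>X. \<forall>s. length (E xh s) = l s)
            \<and> (\<forall>Q. stationary p X F Q \<longrightarrow> avg_len p X E Q = LH)"
    using cc by (intro exI)
  show ?thesis using ex inf unfolding AS_def by (rule conjI)
qed

end
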